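(* Let $(x_n)_{n\in\mathbb{N}}$ be a strictly increasing sequence of nonnegative reals with $x_0=0$, $x_0!=1$, $x_n!=x_1\cdots x_n$, and let $\mathcal{N}(t)=\sum_{n\ge 0}t^n/x_n!$ have radius of convergence $R>0$. For $z\in\mathbb{C}$ with $|z|^2<R$ and $t\in\mathbb{R}$ define $$\check z(t)=\frac{z}{\mathcal{N}(|z|^2)}\sum_{n=0}^{\infty}\frac{|z|^{2n}}{x_n!}\exp\big(i(x_{n+2}-x_{n+1})t\big).$$ Then $|\check z(t)|\le |z|$ for all $t\in\mathbb{R}$.
   Context: $\check z(t)$ is the coherent-state expectation (lower symbol) of the time-evolved lowering operator under the Hamiltonian with spectrum $(x_{n+1})$, i.e. the semi-classical phase-space trajectory. *)

theory Defs
  imports "HOL-Analysis.Analysis"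
begin

definition xfact :: "(nat \<Rightarrow> real) \<Rightarrow> nat \<Rightarrow> real" where
  "xfact x n = (\<Prod>k\<in>{1..n}. x k)"

definition NN :: "(nat \<Rightarrow> real) \<Rightarrow> real \<Rightarrow> real" where
  "NN x t = (\<Sum>n. t ^ n / xfact x n)"

definition radiusN :: "(nat \<Rightarrow> real) \<Rightarrow> ereal" where
  "radiusN x = conv_radius (\<lambda>n. 1 / xfact x n)"

definition zcheck :: "(nat \<Rightarrow> real) \<Rightarrow> complex \<Rightarrow> real \<Rightarrow> complex" where
  "zcheck x z t = z / complex_of_real (NN x ((cmod z)\<^sup>2)) *
     (\<Sum>n. complex_of_real ((cmod z) ^ (2 * n) / xfact x n) *
          exp (\<i> * complex_of_real ((x (n + 2) - x (n + 1)) * t)))"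

end

theory Submission
  imports Defs
begin

theorem mainTheorem4:
  fixes x :: "nat \<Rightarrow> real" and z :: complex and t :: real
  assumes mono: "strict_mono x"
    and nonneg: "\<And>n. x n \<ge> 0"
    and x0: "x 0 = 0"
    and Rpos: "radiusN x > 0"
    and zR: "ereal ((cmod z)\<^sup>2) < radiusN x"
  shows "cmod (zcheck x z t) \<le> cmod z"
proof -
  define r where "r = cmod z"
  have xpos: "x k > 0" if "k \<ge> 1" for k
  proof -
    have "x 0 < x k" using mono that unfolding strict_mono_def by auto
    thus ?thesis using x0 by simp
  qed
  have fpos: "xfact x n > 0" for n
    unfolding xfact_def by (rule prod_pos) (auto intro: xpos)
  define a where "a n = r ^ (2*n) / xfact x n" for n
  have a_nn: "a n \<ge> 0" for n unfolding a_def r_def using fpos[of n] by simp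
  have s0: "summable (\<lambda>n. 1 / xfact x n * (r\<^sup>2) ^ n)"
    by (rule summable_in_conv_radius) (use zR in \<open>simp add: radiusN_def r_def\<close>)
  have aeq: "a n = 1 / xfact x n * (r\<^sup>2) ^ n" for n
    unfolding a_def by (simp add: power_mult)
  have afun: "a = (\<lambda>n. 1 / xfact x n * (r\<^sup>2) ^ n)" by (rule ext, rule aeq)
  have sa: "summable a" using s0 unfolding afun .
  have NNeq: "NN x (r\<^sup>2) = suminf a"
    unfolding NN_def afun by simp
  define g where "g n = complex_of_real (a n) *
          exp (\<i> * complex_of_real ((x (n + 2) - x (n + 1)) * t))" for n
  have ng: "norm (g n) = a n" for n
    unfolding g_def using a_nn[of n] by (simp add: norm_mult)
  have ngf: "(\<lambda>n. norm (g n)) = a" using ng by auto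
  have sg: "summable (\<lambda>n. norm (g n))" unfolding ngf by (rule sa)
  have bound: "norm (suminf g) \<le> suminf a"
    using summable_norm[OF sg] unfolding ngf .
  have Npos: "suminf a > 0"
  proof -
    have "a 0 = 1" unfolding a_def xfact_def by simp
    thus ?thesis using sa a_nn by (intro suminf_pos2[where i=0]) auto
  qed
  have zc: "zcheck x z t = z / complex_of_real (suminf a) * suminf g"
    unfolding zcheck_def g_def NNeq[symmetric] a_def r_def by simp
  have "cmod (zcheck x z t) = r / suminf a * norm (suminf g)"
    unfolding zc r_def using Npos by (simp add: norm_mult norm_divide)
  also have "\<dots> \<le> r / suminf a * suminf a"
    by (rule mult_left_mono[OF bound]) (use Npos in \<open>simp add: r_def\<close>)
  also have "\<dots> = r" using Npos by simp
  finally show ?thesis by (simp add: r_def)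
qed

end
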